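(* Two measure-and-prepare instruments $\mathcal{I}\in\mathrm{Ins}(\Omega,\mathcal{H},\mathcal{K})$ and $\mathcal{J}\in\mathrm{Ins}(\Lambda,\mathcal{H},\mathcal{V})$ are compatible if and only if their induced POVMs $\mathsf{A}^{\mathcal{I}}$ and $\mathsf{A}^{\mathcal{J}}$ are compatible.
   Context: All Hilbert spaces are finite-dimensional and complex, and all outcome sets are finite. A POVM $\mathsf{A}\in\mathcal{O}(\Omega,\mathcal{H})$ is a map $x\mapsto\mathsf{A}(x)$ to positive operators with $\sum_x\mathsf{A}(x)=I$; POVMs $\mathsf{A}\in\mathcal{O}(\Omega,\mathcal{H})$, $\mathsf{B}\in\mathcal{O}(\Lambda,\mathcal{H})$ are compatible if there is $\mathsf{G}\in\mathcal{O}(\Omega\times\Lambda,\mathcal{H})$ with $\sum_x\mathsf{G}(x,y)=\mathsf{B}(y)$ and $\sum_y\mathsf{G}(x,y)=\mathsf{A}(x)$. An instrument $\mathcal{I}\in\mathrm{Ins}(\Omega,\mathcal{H},\mathcal{K})$ is a family $(\mathcal{I}_x)_{x\in\Omega}$ of completely positive trace-nonincreasing linear maps $\mathcal{L}(\mathcal{H})\to\mathcal{L}(\mathcal{K})$ whose sum is trace preserving; its induced POVM is given by $\mathrm{tr}[\mathsf{A}^{\mathcal{I}}(x)\varrho]=\mathrm{tr}[\mathcal{I}_x(\varrho)]$. It is measure-and-prepare if there are a POVM $\mathsf{A}$ and states $\{\xi_x\}$ on $\mathcal{K}$ with $\mathcal{I}_x(\varrho)=\mathrm{tr}[\mathsf{A}(x)\varrho]\xi_x$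 for all $x,\varrho$. Two instruments $\mathcal{I}\in\mathrm{Ins}(\Omega,\mathcal{H},\mathcal{K})$, $\mathcal{J}\in\mathrm{Ins}(\Lambda,\mathcal{H},\mathcal{V})$ are compatible if there is $\mathcal{G}\in\mathrm{Ins}(\Omega\times\Lambda,\mathcal{H},\mathcal{K}\otimes\mathcal{V})$ with $\sum_{x}\mathrm{tr}_{\mathcal{K}}[\mathcal{G}_{(x,y)}(\varrho)]=\mathcal{J}_y(\varrho)$ for all $y$ and $\sum_y\mathrm{tr}_{\mathcal{V}}[\mathcal{G}_{(x,y)}(\varrho)]=\mathcal{I}_x(\varrho)$ for all $x$, for all states $\varrho$. *)

theory Defs
  imports "Jordan_Normal_Form.Matrix" "Jordan_Normal_Form.Conjugate"
begin

text \<open>Finite-dimensional complex Hilbert spaces are modelled as C^d (d a natural number);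
  operators on C^d are d x d complex matrices (Jordan_Normal_Form mat).
  The tensor product C^m (x) C^n is C^(m*n) with basis index (k,v) |-> k*n + v.\<close>

definition mtrace :: "complex mat \<Rightarrow> complex" where
  "mtrace A = (\<Sum>i<dim_row A. A $$ (i, i))"

definition msum :: "nat \<Rightarrow> nat \<Rightarrow> ('x \<Rightarrow> complex mat) \<Rightarrow> 'x set \<Rightarrow> complex mat" where
  "msum d e f S = mat d e (\<lambda>(i, j). \<Sum>x\<in>S. f x $$ (i, j))"

definition positive_op :: "nat \<Rightarrow> complex mat \<Rightarrow> bool" where
  "positive_op d A \<longleftrightarrow> A \<in> carrier_mat d d \<and>
     (\<forall>v \<in> carrier_vec d. Im ((A *\<^sub>v v) \<bullet>c v) = 0 \<and> Re ((A *\<^sub>v v) \<bullet>c v) \<ge> 0)"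

definition is_state :: "nat \<Rightarrow> complex mat \<Rightarrow> bool" where
  "is_state d \<rho> \<longleftrightarrow> positive_op d \<rho> \<and> mtrace \<rho> = 1"

definition is_povm :: "nat \<Rightarrow> ('x::finite \<Rightarrow> complex mat) \<Rightarrow> bool" where
  "is_povm d A \<longleftrightarrow> (\<forall>x. positive_op d (A x)) \<and> msum d d A UNIV = 1\<^sub>m d"

definition compatible_povms :: "nat \<Rightarrow> ('x::finite \<Rightarrow> complex mat) \<Rightarrow> ('y::finite \<Rightarrow> complex mat) \<Rightarrow> bool" where
  "compatible_povms d A B \<longleftrightarrow> (\<exists>G :: 'x \<times> 'y \<Rightarrow> complex mat. is_povm d G \<and>
      (\<forall>y. msum d d (\<lambda>x. G (x, y)) UNIV = B y) \<and>
      (\<forall>x. msum d d (\<lambda>y. G (x, y)) UNIV = A x))"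

definition linear_map :: "nat \<Rightarrow> nat \<Rightarrow> (complex mat \<Rightarrow> complex mat) \<Rightarrow> bool" where
  "linear_map m n \<Phi> \<longleftrightarrow>
     (\<forall>X \<in> carrier_mat m m. \<Phi> X \<in> carrier_mat n n) \<and>
     (\<forall>X \<in> carrier_mat m m. \<forall>Y \<in> carrier_mat m m. \<Phi> (X + Y) = \<Phi> X + \<Phi> Y) \<and>
     (\<forall>c. \<forall>X \<in> carrier_mat m m. \<Phi> (c \<cdot>\<^sub>m X) = c \<cdot>\<^sub>m \<Phi> X)"

text \<open>The amplification id_k (x) Phi, acting on (k*m) x (k*m) block matrices:
  the (a,b) block of the output is Phi applied to the (a,b) block of the input.\<close>
definition ampl :: "nat \<Rightarrow> nat \<Rightarrow> nat \<Rightarrow> (complex mat \<Rightarrow> complex mat) \<Rightarrow> complex mat \<Rightarrow> complex mat" where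
  "ampl k m n \<Phi> X = mat (k * n) (k * n) (\<lambda>(i, j).
      \<Phi> (mat m m (\<lambda>(r, s). X $$ ((i div n) * m + r, (j div n) * m + s))) $$ (i mod n, j mod n))"

definition completely_positive :: "nat \<Rightarrow> nat \<Rightarrow> (complex mat \<Rightarrow> complex mat) \<Rightarrow> bool" where
  "completely_positive m n \<Phi> \<longleftrightarrow> linear_map m n \<Phi> \<and>
     (\<forall>k. \<forall>X. positive_op (k * m) X \<longrightarrow> positive_op (k * n) (ampl k m n \<Phi> X))"

definition trace_nonincreasing :: "nat \<Rightarrow> (complex mat \<Rightarrow> complex mat) \<Rightarrow> bool" where
  "trace_nonincreasing m \<Phi> \<longleftrightarrow>
     (\<forall>X. positive_op m X \<longrightarrow> Re (mtrace (\<Phi> X)) \<le> Re (mtrace X))"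

definition trace_preserving :: "nat \<Rightarrow> (complex mat \<Rightarrow> complex mat) \<Rightarrow> bool" where
  "trace_preserving m \<Phi> \<longleftrightarrow> (\<forall>X \<in> carrier_mat m m. mtrace (\<Phi> X) = mtrace X)"

definition is_instrument :: "nat \<Rightarrow> nat \<Rightarrow> ('x::finite \<Rightarrow> complex mat \<Rightarrow> complex mat) \<Rightarrow> bool" where
  "is_instrument m n I \<longleftrightarrow>
     (\<forall>x. completely_positive m n (I x) \<and> trace_nonincreasing m (I x)) \<and>
     trace_preserving m (\<lambda>X. msum n n (\<lambda>x. I x X) UNIV)"

definition induced_povm :: "nat \<Rightarrow> ('x \<Rightarrow> complex mat \<Rightarrow> complex mat) \<Rightarrow> ('x \<Rightarrow> complex mat) \<Rightarrow> bool" where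
  "induced_povm m I A \<longleftrightarrow> (\<forall>x. A x \<in> carrier_mat m m \<and>
      (\<forall>\<rho>. is_state m \<rho> \<longrightarrow> mtrace (A x * \<rho>) = mtrace (I x \<rho>)))"

definition measure_and_prepare :: "nat \<Rightarrow> nat \<Rightarrow> ('x::finite \<Rightarrow> complex mat \<Rightarrow> complex mat) \<Rightarrow> bool" where
  "measure_and_prepare m n I \<longleftrightarrow> (\<exists>A \<xi>. is_povm m A \<and> (\<forall>x. is_state n (\<xi> x)) \<and>
      (\<forall>x \<rho>. is_state m \<rho> \<longrightarrow> I x \<rho> = mtrace (A x * \<rho>) \<cdot>\<^sub>m \<xi> x))"

definition ptrace_first :: "nat \<Rightarrow> nat \<Rightarrow> complex mat \<Rightarrow> complex mat" where
  "ptrace_first k v M = mat v v (\<lambda>(b, b'). \<Sum>a<k. M $$ (a * v + b, a * v + b'))"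

definition ptrace_second :: "nat \<Rightarrow> nat \<Rightarrow> complex mat \<Rightarrow> complex mat" where
  "ptrace_second k v M = mat k k (\<lambda>(a, a'). \<Sum>b<v. M $$ (a * v + b, a' * v + b))"

definition compatible_instruments :: "nat \<Rightarrow> nat \<Rightarrow> nat \<Rightarrow>
    ('x::finite \<Rightarrow> complex mat \<Rightarrow> complex mat) \<Rightarrow> ('y::finite \<Rightarrow> complex mat \<Rightarrow> complex mat) \<Rightarrow> bool" where
  "compatible_instruments h k v I J \<longleftrightarrow>
     (\<exists>G :: 'x \<times> 'y \<Rightarrow> complex mat \<Rightarrow> complex mat. is_instrument h (k * v) G \<and>
        (\<forall>\<rho>. is_state h \<rho> \<longrightarrow>
          (\<forall>y. msum v v (\<lambda>x. ptrace_first k v (G (x, y) \<rho>)) UNIV = J y \<rho>) \<and>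
          (\<forall>x. msum k k (\<lambda>y. ptrace_second k v (G (x, y) \<rho>)) UNIV = I x \<rho>)))"

end

theory Submission
  imports Defs
begin

definition qf :: "nat \<Rightarrow> complex mat \<Rightarrow> (nat \<Rightarrow> complex) \<Rightarrow> complex" where
  "qf d M f = (\<Sum>i<d. \<Sum>j<d. cnj (f i) * M $$ (i, j) * f j)"

definition psd :: "nat \<Rightarrow> complex mat \<Rightarrow> bool" where
  "psd d M \<longleftrightarrow> M \<in> carrier_mat d d \<and> (\<forall>f. Im (qf d M f) = 0 \<and> Re (qf d M f) \<ge> 0)"

lemma qf_vec:
  assumes "M \<in> carrier_mat d d"
  shows "(M *\<^sub>v vec d f) \<bullet>c vec d f = qf d M f"
  using assms unfolding qf_def
  by (auto simp: scalar_prod_def sum_distrib_left sum_distrib_right mult.commute mult.left_commute atLeast0LessThan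
     intro!: sum.cong)

lemma positive_op_psd: "positive_op d M \<longleftrightarrow> psd d M"
proof
  assume "positive_op d M"
  then show "psd d M" unfolding positive_op_def psd_def
    using qf_vec by (metis vec_carrier)
next
  assume a: "psd d M"
  show "positive_op d M" unfolding positive_op_def
  proof (intro conjI ballI)
    show "M \<in> carrier_mat d d" using a psd_def by blast
    fix v :: "complex vec" assume v: "v \<in> carrier_vec d"
    then have "v = vec d (\<lambda>i. v $ i)" by auto
    then have "(M *\<^sub>v v) \<bullet>c v = qf d M (\<lambda>i. v $ i)"
      using qf_vec a psd_def by metis
    then show "Im ((M *\<^sub>v v) \<bullet>c v) = 0" "Re ((M *\<^sub>v v) \<bullet>c v) \<ge> 0" using a psd_def by auto
  qed
qed

lemma sum_reindex_mult:
  fixes f :: "nat \<Rightarrow> 'a::comm_monoid_add"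
  shows "(\<Sum>i<k*n. f i) = (\<Sum>a<k. \<Sum>p<n. f (a*n+p))"
proof -
  have "(\<Sum>i<k*n. f i) = (\<Sum>a<k. sum f {a*n..<a*n+n})"
    using sum.nat_group[of f n k] by simp
  also have "\<dots> = (\<Sum>a<k. \<Sum>p<n. f (a*n+p))"
  proof (rule sum.cong[OF refl])
    fix a show "sum f {a*n..<a*n+n} = (\<Sum>p<n. f (a*n+p))"
      by (rule sum.reindex_bij_witness[of _ "\<lambda>p. a*n+p" "\<lambda>i. i - a*n"]) auto
  qed
  finally show ?thesis .
qed

lemma sum_one_delta:
  fixes g :: "nat \<Rightarrow> complex"
  assumes "a < d"
  shows "(\<Sum>j<d. g j * (if j = a then x else 0)) = g a * x"
proof -
  have "(\<Sum>j<d. g j * (if j = a then x else 0)) = (\<Sum>j<d. if j = a then g j * x else 0)"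
    by (rule sum.cong) auto
  also have "\<dots> = g a * x" using assms by (simp add: sum.delta)
  finally show ?thesis .
qed

lemma sum_two_delta:
  fixes g :: "nat \<Rightarrow> complex"
  assumes "a < d" "b < d"
  shows "(\<Sum>j<d. g j * ((if j = a then x else 0) + (if j = b then y else 0))) = g a * x + g b * y"
proof -
  have "(\<Sum>j<d. g j * ((if j = a then x else 0) + (if j = b then y else 0))) =
     (\<Sum>j<d. g j * (if j = a then x else 0)) + (\<Sum>j<d. g j * (if j = b then y else 0))"
    by (simp only: distrib_left sum.distrib)
  also have "\<dots> = g a * x + g b * y" using assms by (simp only: sum_one_delta)
  finally show ?thesis .
qed

lemma qf_two:
  assumes "a < d" "b < d"
  shows "qf d M (\<lambda>i. (if i = a then x else 0) + (if i = b then y else 0)) =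
     cnj x * M $$ (a, a) * x + cnj x * M $$ (a, b) * y + cnj y * M $$ (b, a) * x + cnj y * M $$ (b, b) * y"
proof -
  let ?f = "\<lambda>i. (if i = a then x else 0) + (if i = b then y else 0)"
  have "qf d M ?f = (\<Sum>i<d. cnj (?f i) * (M $$ (i, a) * x + M $$ (i, b) * y))"
    unfolding qf_def
  proof (rule sum.cong[OF refl])
    fix i
    have "(\<Sum>j<d. cnj (?f i) * M $$ (i, j) * ?f j) = cnj (?f i) * M $$ (i, a) * x + cnj (?f i) * M $$ (i, b) * y"
      by (rule sum_two_delta[OF assms])
    then show "(\<Sum>j<d. cnj (?f i) * M $$ (i, j) * ?f j) = cnj (?f i) * (M $$ (i, a) * x + M $$ (i, b) * y)"
      by (simp only: distrib_left mult.assoc)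
  qed
  also have "\<dots> = (\<Sum>i<d. (M $$ (i, a) * x + M $$ (i, b) * y) * ((if i = a then cnj x else 0) + (if i = b then cnj y else 0)))"
    by (rule sum.cong[OF refl]) (simp add: mult.commute)
  also have "\<dots> = (M $$ (a, a) * x + M $$ (a, b) * y) * cnj x + (M $$ (b, a) * x + M $$ (b, b) * y) * cnj y"
    by (rule sum_two_delta[OF assms])
  finally show ?thesis by (simp add: algebra_simps)
qed

lemma qf_one:
  assumes "a < d"
  shows "qf d M (\<lambda>i. if i = a then x else 0) = cnj x * M $$ (a, a) * x"
proof -
  have "qf d M (\<lambda>i. if i = a then x else 0) = (\<Sum>i<d. cnj (if i = a then x else 0) * M $$ (i, a) * x)"
    unfolding qf_def
  proof (rule sum.cong[OF refl])
    fix i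
    show "(\<Sum>j<d. cnj (if i = a then x else 0) * M $$ (i, j) * (if j = a then x else 0)) = cnj (if i = a then x else 0) * M $$ (i, a) * x"
      by (rule sum_one_delta[OF assms])
  qed
  also have "\<dots> = (\<Sum>i<d. (M $$ (i, a) * x) * (if i = a then cnj x else 0))"
    by (rule sum.cong[OF refl]) (simp add: mult.commute)
  also have "\<dots> = cnj x * M $$ (a, a) * x" by (simp only: sum_one_delta[OF assms]) (simp add: algebra_simps)
  finally show ?thesis .
qed

lemma qf_eq_imp_eq:
  assumes M: "M \<in> carrier_mat d d" and N: "N \<in> carrier_mat d d"
    and eq: "\<And>f. qf d M f = qf d N f"
  shows "M = N"
proof (rule eq_matI)
  show "dim_row M = dim_row N" "dim_col M = dim_col N" using M N by auto
  have diag: "M $$ (a, a) = N $$ (a, a)" if "a < d" for a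
    using eq[of "\<lambda>i. if i = a then 1 else 0"] qf_one[OF that] by simp
  fix i j assume "i < dim_row N" "j < dim_col N"
  then have i: "i < d" and j: "j < d" using N by auto
  show "M $$ (i, j) = N $$ (i, j)"
  proof (cases "i = j")
    case True then show ?thesis using diag i by simp
  next
    case False
    have e1: "M $$ (i, j) + M $$ (j, i) = N $$ (i, j) + N $$ (j, i)"
      using eq[of "\<lambda>k. (if k = i then 1 else 0) + (if k = j then 1 else 0)"]
        qf_two[OF i j, of M 1 1] qf_two[OF i j, of N 1 1] diag[OF i] diag[OF j]
      by simp
    have e2: "\<i> * M $$ (i, j) - \<i> * M $$ (j, i) = \<i> * N $$ (i, j) - \<i> * N $$ (j, i)"
      using eq[of "\<lambda>k. (if k = i then 1 else 0) + (if k = j then \<i> else 0)"]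
        qf_two[OF i j, of M 1 \<i>] qf_two[OF i j, of N 1 \<i>] diag[OF i] diag[OF j]
      by (simp add: algebra_simps)
    from e2 have e3: "M $$ (i, j) - M $$ (j, i) = N $$ (i, j) - N $$ (j, i)"
      by (metis complex_i_not_zero mult_cancel_left right_diff_distrib)
    from e1 e3 have "(M $$ (i, j) + M $$ (j, i)) + (M $$ (i, j) - M $$ (j, i)) = (N $$ (i, j) + N $$ (j, i)) + (N $$ (i, j) - N $$ (j, i))"
      by simp
    then show ?thesis by (simp add: algebra_simps)
  qed
qed

lemma qf_cnj_swap:
  "cnj (qf d M f) = (\<Sum>i<d. \<Sum>j<d. cnj (f i) * cnj (M $$ (j, i)) * f j)"
proof -
  have "cnj (qf d M f) = (\<Sum>i<d. \<Sum>j<d. f i * cnj (M $$ (i, j)) * cnj (f j))"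
    unfolding qf_def by (simp add: cnj_sum)
  also have "\<dots> = (\<Sum>j<d. \<Sum>i<d. f i * cnj (M $$ (i, j)) * cnj (f j))"
    by (rule sum.swap)
  also have "\<dots> = (\<Sum>i<d. \<Sum>j<d. cnj (f i) * cnj (M $$ (j, i)) * f j)"
    by (simp add: mult.commute mult.left_commute)
  finally show ?thesis .
qed

lemma psd_herm:
  assumes "psd d M" "i < d" "j < d"
  shows "M $$ (i, j) = cnj (M $$ (j, i))"
proof -
  have M: "M \<in> carrier_mat d d" using assms psd_def by auto
  define H where "H = mat d d (\<lambda>(i, j). cnj (M $$ (j, i)))"
  have H: "H \<in> carrier_mat d d" unfolding H_def by auto
  have "qf d H f = qf d M f" for f
  proof -
    have "qf d H f = cnj (qf d M f)"
      unfolding qf_cnj_swap unfolding qf_def H_def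
      by (intro sum.cong refl) simp
    also have "\<dots> = qf d M f" using assms(1) unfolding psd_def by (simp add: complex_eq_iff)
    finally show ?thesis .
  qed
  then have "H = M" using qf_eq_imp_eq[OF H M] by blast
  then have "H $$ (i, j) = M $$ (i, j)" by simp
  then show ?thesis unfolding H_def using assms by simp
qed

lemma psd_diag:
  assumes "psd d M" "a < d"
  shows "Im (M $$ (a, a)) = 0 \<and> Re (M $$ (a, a)) \<ge> 0"
  using assms qf_one[OF assms(2), of M 1] unfolding psd_def by (metis complex_cnj_one mult_1 mult.right_neutral)

lemma psd_trace:
  assumes "psd d M"
  shows "Im (mtrace M) = 0 \<and> Re (mtrace M) \<ge> 0"
proof -
  have dr: "dim_row M = d" using assms psd_def by auto
  show ?thesis unfolding mtrace_def dr using psd_diag[OF assms]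
    by (auto simp: Im_sum Re_sum intro: sum_nonneg)
qed

lemma qf_add_delta:
  assumes c: "c < d"
  shows "qf d M (\<lambda>i. f i + (if i = c then t else 0)) =
    qf d M f + cnj t * (\<Sum>j<d. M $$ (c, j) * f j) + (\<Sum>i<d. cnj (f i) * M $$ (i, c)) * t + cnj t * M $$ (c, c) * t"
proof -
  let ?e = "\<lambda>i::nat. if i = c then t else 0"
  have inner: "(\<Sum>j<d. x * M $$ (i, j) * (f j + ?e j)) = (\<Sum>j<d. x * M $$ (i, j) * f j) + x * M $$ (i, c) * t" for x i
  proof -
    have "(\<Sum>j<d. x * M $$ (i, j) * (f j + ?e j)) = (\<Sum>j<d. x * M $$ (i, j) * f j) + (\<Sum>j<d. x * M $$ (i, j) * ?e j)"
      by (simp only: distrib_left sum.distrib)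
    also have "(\<Sum>j<d. x * M $$ (i, j) * ?e j) = x * M $$ (i, c) * t" by (rule sum_one_delta[OF c])
    finally show ?thesis .
  qed
  have "qf d M (\<lambda>i. f i + ?e i) = (\<Sum>i<d. (\<Sum>j<d. cnj (f i + ?e i) * M $$ (i, j) * f j) + cnj (f i + ?e i) * M $$ (i, c) * t)"
    unfolding qf_def by (simp only: inner)
  also have "\<dots> = (\<Sum>i<d. (\<Sum>j<d. cnj (f i) * M $$ (i, j) * f j) + cnj (f i) * M $$ (i, c) * t
       + (\<Sum>j<d. M $$ (i, j) * f j) * (if i = c then cnj t else 0) + (M $$ (i, c) * t) * (if i = c then cnj t else 0))"
    by (rule sum.cong[OF refl]) (simp add: algebra_simps sum.distrib sum_distrib_left)
  also have "\<dots> = qf d M f + (\<Sum>i<d. cnj (f i) * M $$ (i, c)) * t + (\<Sum>j<d. M $$ (c, j) * f j) * cnj t + (M $$ (c, c) * t) * cnj t"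
    unfolding qf_def sum.distrib sum_one_delta[OF c] by (simp add: sum_distrib_right)
  finally show ?thesis by (simp add: algebra_simps)
qed

lemma psd_zero_diag:
  assumes P: "psd d P" and c: "c < d" and b: "b < d" and z: "P $$ (c, c) = 0"
  shows "P $$ (b, c) = 0"
proof (rule ccontr)
  assume nz: "P $$ (b, c) \<noteq> 0"
  then have bc: "b \<noteq> c" using z by auto
  define w where "w = P $$ (b, c)"
  define q where "q = P $$ (b, b)"
  define r where "r = (Re q + 1) / (2 * (cmod w)^2)"
  define t where "t = - (complex_of_real r * cnj w)"
  have wpos: "cmod w > 0" using nz w_def by auto
  have wcw: "w * cnj w = complex_of_real ((cmod w)^2)"
    using complex_norm_square[of w] by simp
  have wt: "w * t = - complex_of_real ((Re q + 1) / 2)"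
  proof -
    have "w * t = - (complex_of_real r * (w * cnj w))" unfolding t_def by (simp add: algebra_simps)
    also have "\<dots> = - complex_of_real (r * (cmod w)^2)" unfolding wcw by simp
    also have "r * (cmod w)^2 = (Re q + 1) / 2" unfolding r_def using wpos by (simp add: field_simps)
    finally show ?thesis by simp
  qed
  have hc: "P $$ (c, b) = cnj w" using psd_herm[OF P c b] w_def by simp
  have "qf d P (\<lambda>i. (if i = c then t else 0) + (if i = b then 1 else 0)) =
      cnj t * P $$ (c, c) * t + cnj t * P $$ (c, b) * 1 + cnj 1 * P $$ (b, c) * t + cnj 1 * P $$ (b, b) * 1"
    by (rule qf_two[OF c b])
  also have "\<dots> = cnj (w * t) + w * t + q" using z hc unfolding w_def q_def by simp
  finally have "Re (qf d P (\<lambda>i. (if i = c then t else 0) + (if i = b then 1 else 0))) = - (Re q + 1) + Re q"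
    unfolding wt by simp
  moreover have "Re (qf d P (\<lambda>i. (if i = c then t else 0) + (if i = b then 1 else 0))) \<ge> 0"
    using P unfolding psd_def by blast
  ultimately show False by simp
qed

lemma psd_schur:
  assumes P: "psd d P" and c: "c < d" and nz: "P $$ (c, c) \<noteq> 0"
  shows "psd d (mat d d (\<lambda>(a, b). P $$ (a, b) - P $$ (a, c) * P $$ (c, b) / P $$ (c, c)))"
    (is "psd d ?P'")
proof -
  define p where "p = P $$ (c, c)"
  have cp: "cnj p = p" using psd_diag[OF P c] unfolding p_def by (simp add: complex_eq_iff)
  have pnz: "p \<noteq> 0" using nz p_def by simp
  have "qf d ?P' f = qf d P (\<lambda>i. f i + (if i = c then - (\<Sum>j<d. P $$ (c, j) * f j) / p else 0))" for f
  proof -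
    define w where "w = (\<Sum>j<d. P $$ (c, j) * f j)"
    define v where "v = (\<Sum>i<d. cnj (f i) * P $$ (i, c))"
    have "qf d ?P' f = (\<Sum>i<d. \<Sum>j<d. cnj (f i) * P $$ (i, j) * f j - (cnj (f i) * P $$ (i, c)) * (P $$ (c, j) * f j) / p)"
      unfolding qf_def p_def by (intro sum.cong refl) (simp add: algebra_simps)
    also have "\<dots> = qf d P f - (\<Sum>i<d. \<Sum>j<d. (cnj (f i) * P $$ (i, c)) * (P $$ (c, j) * f j)) / p"
      unfolding qf_def by (simp add: sum_subtractf sum_divide_distrib)
    also have "(\<Sum>i<d. \<Sum>j<d. (cnj (f i) * P $$ (i, c)) * (P $$ (c, j) * f j)) = v * w"
      unfolding v_def w_def by (simp add: sum_product)
    finally have L: "qf d ?P' f = qf d P f - v * w / p" .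
    have R: "qf d P (\<lambda>i. f i + (if i = c then - w / p else 0)) =
       qf d P f + cnj (- w / p) * w + v * (- w / p) + cnj (- w / p) * p * (- w / p)"
      using qf_add_delta[OF c, of P f "- w / p"] unfolding v_def w_def p_def by simp
    have "cnj (- w / p) * w + v * (- w / p) + cnj (- w / p) * p * (- w / p) = - v * w / p"
      using cp pnz by (simp add: field_simps)
    then show ?thesis using L R unfolding w_def by simp
  qed
  moreover have "Im (qf d P g) = 0 \<and> Re (qf d P g) \<ge> 0" for g using P unfolding psd_def by blast
  ultimately show ?thesis unfolding psd_def by auto
qed

lemma gram_aux:
  "\<forall>P. psd d P \<and> (\<forall>a<d. \<forall>b<d. (a < d - j \<or> b < d - j) \<longrightarrow> P $$ (a, b) = 0) \<longrightarrow>
     (\<exists>(n::nat) u. \<forall>a<d. \<forall>b<d. P $$ (a, b) = (\<Sum>l<n. u l a * cnj (u l b)))"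
proof (induction j)
  case 0
  show ?case
  proof (intro allI impI)
    fix P assume "psd d P \<and> (\<forall>a<d. \<forall>b<d. (a < d - 0 \<or> b < d - 0) \<longrightarrow> P $$ (a, b) = 0)"
    then have z: "\<forall>a<d. \<forall>b<d. P $$ (a, b) = 0" by simp
    show "\<exists>(n::nat) u. \<forall>a<d. \<forall>b<d. P $$ (a, b) = (\<Sum>l<n. u l a * cnj (u l b))"
    proof (rule exI[of _ "0::nat"], rule exI[of _ "\<lambda>(_::nat) (_::nat). 0::complex"])
      show "\<forall>a<d. \<forall>b<d. P $$ (a, b) = (\<Sum>l<0. (\<lambda>_ _. 0) l a * cnj ((\<lambda>_ _. 0) l b))" using z by simp
    qed
  qed
next
  case (Suc j)
  show ?case
  proof (intro allI impI)
    fix P assume A: "psd d P \<and> (\<forall>a<d. \<forall>b<d. (a < d - Suc j \<or> b < d - Suc j) \<longrightarrow> P $$ (a, b) = 0)"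
    then have P: "psd d P" and supp: "\<And>a b. a < d \<Longrightarrow> b < d \<Longrightarrow> a < d - Suc j \<or> b < d - Suc j \<Longrightarrow> P $$ (a, b) = 0"
      by auto
    show "\<exists>(n::nat) u. \<forall>a<d. \<forall>b<d. P $$ (a, b) = (\<Sum>l<n. u l a * cnj (u l b))"
    proof (cases "d \<le> j")
      case True
      then have "d - Suc j = d - j" by simp
      then show ?thesis using Suc.IH[rule_format, of P] A by metis
    next
      case False
      define c where "c = d - Suc j"
      have c: "c < d" and dj: "d - j = Suc c" using False c_def by auto
      show ?thesis
      proof (cases "P $$ (c, c) = 0")
        case True
        have col: "P $$ (b, c) = 0" if "b < d" for b using psd_zero_diag[OF P c that True] .
        have row: "P $$ (c, b) = 0" if "b < d" for b using psd_herm[OF P c that] col[OF that] by simp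
        have "\<forall>a<d. \<forall>b<d. (a < d - j \<or> b < d - j) \<longrightarrow> P $$ (a, b) = 0"
        proof (intro allI impI)
          fix a b assume ab: "a < d" "b < d" "a < d - j \<or> b < d - j"
          then have "a < c \<or> b < c \<or> a = c \<or> b = c" unfolding dj by auto
          then show "P $$ (a, b) = 0" using supp[OF ab(1,2)] col[OF ab(2)] row[OF ab(2)] col[OF ab(1)] row[OF ab(1)] c_def by fastforce
        qed
        then show ?thesis using Suc.IH[rule_format, of P] P by blast
      next
        case False
        define P' where "P' = mat d d (\<lambda>(a, b). P $$ (a, b) - P $$ (a, c) * P $$ (c, b) / P $$ (c, c))"
        have P': "psd d P'" unfolding P'_def by (rule psd_schur[OF P c False])
        have P'e: "P' $$ (a, b) = P $$ (a, b) - P $$ (a, c) * P $$ (c, b) / P $$ (c, c)" if "a < d" "b < d" for a b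
          unfolding P'_def using that by simp
        have supp': "\<forall>a<d. \<forall>b<d. (a < d - j \<or> b < d - j) \<longrightarrow> P' $$ (a, b) = 0"
        proof (intro allI impI)
          fix a b assume ab: "a < d" "b < d" "a < d - j \<or> b < d - j"
          then have "a < c \<or> b < c \<or> a = c \<or> b = c" unfolding dj by auto
          moreover have "P $$ (a, b) = 0" if "a < c \<or> b < c" using supp[OF ab(1,2)] that c_def by auto
          moreover have "P $$ (a, c) = 0" if "a < c" using supp[OF ab(1) c] that c_def by auto
          moreover have "P $$ (c, b) = 0" if "b < c" using supp[OF c ab(2)] that c_def by auto
          ultimately show "P' $$ (a, b) = 0" unfolding P'e[OF ab(1,2)] using False by auto
        qed
        have ex: "\<exists>(n::nat) u. \<forall>a<d. \<forall>b<d. P' $$ (a, b) = (\<Sum>l<n. u l a * cnj (u l b))"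
          using Suc.IH[THEN spec[of _ P']] P' supp' by blast
        then obtain n :: nat and u where nu: "\<forall>a<d. \<forall>b<d. P' $$ (a, b) = (\<Sum>l<n. u l a * cnj (u l b))"
          by blast
        define s where "s = sqrt (Re (P $$ (c, c)))"
        define u' where "u' = (\<lambda>l a. if l = n then P $$ (a, c) / complex_of_real s else u l a)"
        have ss: "complex_of_real s * complex_of_real s = P $$ (c, c)"
        proof -
          have pc: "Im (P $$ (c, c)) = 0 \<and> Re (P $$ (c, c)) \<ge> 0" using psd_diag[OF P c] .
          have "s * s = Re (P $$ (c, c))" unfolding s_def using pc by simp
          then have "complex_of_real s * complex_of_real s = complex_of_real (Re (P $$ (c, c)))"
            by (metis of_real_mult)
          also have "\<dots> = P $$ (c, c)" using pc by (simp add: complex_eq_iff)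
          finally show ?thesis .
        qed
        have "\<forall>a<d. \<forall>b<d. P $$ (a, b) = (\<Sum>l<Suc n. u' l a * cnj (u' l b))"
        proof (intro allI impI)
          fix a b assume a: "a < d" and b: "b < d"
          have "(\<Sum>l<n. u' l a * cnj (u' l b)) = (\<Sum>l<n. u l a * cnj (u l b))"
            unfolding u'_def by (intro sum.cong) auto
          then have "(\<Sum>l<Suc n. u' l a * cnj (u' l b)) = (\<Sum>l<n. u l a * cnj (u l b)) + u' n a * cnj (u' n b)"
            by simp
          also have "(\<Sum>l<n. u l a * cnj (u l b)) = P' $$ (a, b)" using nu a b by simp
          also have "u' n a * cnj (u' n b) = P $$ (a, c) * cnj (P $$ (b, c)) / (complex_of_real s * complex_of_real s)"
            unfolding u'_def by simp
          also have "\<dots> = P $$ (a, c) * P $$ (c, b) / P $$ (c, c)"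
            unfolding ss using psd_herm[OF P c b] by simp
          finally show "P $$ (a, b) = (\<Sum>l<Suc n. u' l a * cnj (u' l b))" using P'e[OF a b] by simp
        qed
        then show ?thesis by (intro exI[of _ "Suc n"] exI[of _ u'])
      qed
    qed
  qed
qed

lemma psd_gram:
  assumes "psd d P"
  shows "\<exists>(n::nat) u. \<forall>a<d. \<forall>b<d. P $$ (a, b) = (\<Sum>l<n. u l a * cnj (u l b))"
  using gram_aux[of d d] assms by auto

lemma qf_block:
  "qf (k*n) M z = (\<Sum>a<k. \<Sum>b<k. \<Sum>p<n. \<Sum>q<n. cnj (z (a*n+p)) * M $$ (a*n+p, b*n+q) * z (b*n+q))"
proof -
  have "qf (k*n) M z = (\<Sum>a<k. \<Sum>p<n. \<Sum>b<k. \<Sum>q<n. cnj (z (a*n+p)) * M $$ (a*n+p, b*n+q) * z (b*n+q))"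
    unfolding qf_def sum_reindex_mult[of _ k n] ..
  also have "\<dots> = (\<Sum>a<k. \<Sum>b<k. \<Sum>p<n. \<Sum>q<n. cnj (z (a*n+p)) * M $$ (a*n+p, b*n+q) * z (b*n+q))"
    by (rule sum.cong[OF refl], rule sum.swap)
  finally show ?thesis .
qed

lemma qf_sum_mat:
  fixes F :: "nat \<Rightarrow> nat \<times> nat \<Rightarrow> complex"
  shows "qf d (mat d d (\<lambda>ij. \<Sum>l<m. F l ij)) z = (\<Sum>l<m. qf d (mat d d (F l)) z)"
proof -
  have "qf d (mat d d (\<lambda>ij. \<Sum>l<m. F l ij)) z = (\<Sum>i<d. \<Sum>j<d. \<Sum>l<m. cnj (z i) * F l (i, j) * z j)"
    unfolding qf_def by (intro sum.cong refl) (simp add: sum_distrib_left sum_distrib_right)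
  also have "\<dots> = (\<Sum>i<d. \<Sum>l<m. \<Sum>j<d. cnj (z i) * F l (i, j) * z j)"
    by (rule sum.cong[OF refl], rule sum.swap)
  also have "\<dots> = (\<Sum>l<m. \<Sum>i<d. \<Sum>j<d. cnj (z i) * F l (i, j) * z j)"
    by (rule sum.swap)
  also have "\<dots> = (\<Sum>l<m. qf d (mat d d (F l)) z)"
    unfolding qf_def by (intro sum.cong refl) simp
  finally show ?thesis .
qed

lemma psd_sum_mat:
  fixes F :: "nat \<Rightarrow> nat \<times> nat \<Rightarrow> complex"
  assumes "\<And>l. l < m \<Longrightarrow> psd d (mat d d (F l))"
  shows "psd d (mat d d (\<lambda>ij. \<Sum>l<m. F l ij))"
  unfolding psd_def qf_sum_mat using assms unfolding psd_def
  by (auto simp: Im_sum Re_sum intro: sum_nonneg)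

lemma divmod_simps:
  assumes "p < (n::nat)"
  shows "(a*n+p) div n = a" "(a*n+p) mod n = p"
  using assms by auto

lemma idx_lt:
  assumes "a < k" "p < (n::nat)"
  shows "a*n+p < k*n"
proof -
  have "a*n+p < a*n+n" using assms by simp
  also have "a*n+n = Suc a * n" by simp
  also have "\<dots> \<le> k*n" using assms by (intro mult_le_mono1) simp
  finally show ?thesis .
qed

lemma psd_kron_rank1:
  assumes P: "psd k P"
  shows "psd (k*n) (mat (k*n) (k*n) (\<lambda>(i, j). P $$ (i div n, j div n) * (s (i mod n) * cnj (s (j mod n)))))"
    (is "psd _ ?Z")
proof -
  have "qf (k*n) ?Z z = qf k P (\<lambda>a. \<Sum>q<n. cnj (s q) * z (a*n+q))" for z
  proof -
    define h where "h = (\<lambda>a. \<Sum>q<n. cnj (s q) * z (a*n+q))"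
    have "qf (k*n) ?Z z = (\<Sum>a<k. \<Sum>b<k. \<Sum>p<n. \<Sum>q<n. cnj (z (a*n+p)) * (P $$ (a, b) * (s p * cnj (s q))) * z (b*n+q))"
      unfolding qf_block
    proof (intro sum.cong refl)
      fix a b p q assume "a \<in> {..<k}" "b \<in> {..<k}" "p \<in> {..<n}" "q \<in> {..<n}"
      then have "a*n+p < k*n" "b*n+q < k*n" "p < n" "q < n" using idx_lt by auto
      then show "cnj (z (a*n+p)) * ?Z $$ (a*n+p, b*n+q) * z (b*n+q) =
          cnj (z (a*n+p)) * (P $$ (a, b) * (s p * cnj (s q))) * z (b*n+q)"
        by (simp add: divmod_simps)
    qed
    also have "\<dots> = (\<Sum>a<k. \<Sum>b<k. cnj (h a) * P $$ (a, b) * h b)"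
    proof (intro sum.cong refl)
      fix a b
      have "cnj (h a) * P $$ (a, b) * h b = (\<Sum>p<n. \<Sum>q<n. (s p * cnj (z (a*n+p))) * P $$ (a, b) * (cnj (s q) * z (b*n+q)))"
        unfolding h_def by (simp add: cnj_sum sum_distrib_left sum_distrib_right) (subst sum.swap, rule refl)
      also have "\<dots> = (\<Sum>p<n. \<Sum>q<n. cnj (z (a*n+p)) * (P $$ (a, b) * (s p * cnj (s q))) * z (b*n+q))"
        by (intro sum.cong refl) (simp add: ac_simps)
      finally show "(\<Sum>p<n. \<Sum>q<n. cnj (z (a*n+p)) * (P $$ (a, b) * (s p * cnj (s q))) * z (b*n+q)) = cnj (h a) * P $$ (a, b) * h b" by simp
    qed
    also have "\<dots> = qf k P h" unfolding qf_def ..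
    finally show ?thesis unfolding h_def .
  qed
  moreover have "Im (qf k P g) = 0 \<and> Re (qf k P g) \<ge> 0" for g using P unfolding psd_def by blast
  ultimately show ?thesis unfolding psd_def by auto
qed

definition kron :: "nat \<Rightarrow> nat \<Rightarrow> complex mat \<Rightarrow> complex mat \<Rightarrow> complex mat" where
  "kron k n P Q = mat (k*n) (k*n) (\<lambda>(i, j). P $$ (i div n, j div n) * Q $$ (i mod n, j mod n))"

lemma psd_kron:
  assumes P: "psd k P" and Q: "psd n Q"
  shows "psd (k*n) (kron k n P Q)"
proof -
  obtain m :: nat and s where s: "\<forall>a<n. \<forall>b<n. Q $$ (a, b) = (\<Sum>l<m. s l a * cnj (s l b))"
    using psd_gram[OF Q] by blast
  have "kron k n P Q = mat (k*n) (k*n) (\<lambda>ij. \<Sum>l<m. (\<lambda>l (i, j). P $$ (i div n, j div n) * (s l (i mod n) * cnj (s l (j mod n)))) l ij)"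
  proof (rule eq_matI)
    fix i j assume "i < dim_row (mat (k*n) (k*n) (\<lambda>ij. \<Sum>l<m. (\<lambda>l (i, j). P $$ (i div n, j div n) * (s l (i mod n) * cnj (s l (j mod n)))) l ij))"
      "j < dim_col (mat (k*n) (k*n) (\<lambda>ij. \<Sum>l<m. (\<lambda>l (i, j). P $$ (i div n, j div n) * (s l (i mod n) * cnj (s l (j mod n)))) l ij))"
    then have ij: "i < k*n" "j < k*n" by auto
    then have "n > 0" by (cases n) auto
    then have "i mod n < n" "j mod n < n" by auto
    then show "kron k n P Q $$ (i, j) = mat (k*n) (k*n) (\<lambda>ij. \<Sum>l<m. (\<lambda>l (i, j). P $$ (i div n, j div n) * (s l (i mod n) * cnj (s l (j mod n)))) l ij) $$ (i, j)"
      unfolding kron_def using ij s by (simp add: sum_distrib_left)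
  qed (auto simp: kron_def)
  also have "psd (k*n) \<dots>"
    by (rule psd_sum_mat, rule psd_kron_rank1[OF P])
  finally show ?thesis .
qed

definition blk :: "nat \<Rightarrow> complex mat \<Rightarrow> nat \<Rightarrow> nat \<Rightarrow> complex mat" where
  "blk m X a b = mat m m (\<lambda>(r, s). X $$ (a*m+r, b*m+s))"

lemma mtrace_mult:
  assumes "A \<in> carrier_mat m m" "B \<in> carrier_mat m m"
  shows "mtrace (A * B) = (\<Sum>r<m. \<Sum>s<m. A $$ (r, s) * B $$ (s, r))"
  using assms unfolding mtrace_def
  by (auto simp: scalar_prod_def atLeast0LessThan intro!: sum.cong)

lemma psd_partial_rank1:
  assumes X: "psd (k*m) X"
  shows "psd k (mat k k (\<lambda>(a, b). \<Sum>s<m. \<Sum>r<m. cnj (g s) * X $$ (a*m+s, b*m+r) * g r))"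
    (is "psd _ ?Y")
proof -
  have "qf k ?Y c = qf (k*m) X (\<lambda>i. c (i div m) * g (i mod m))" for c
  proof -
    have "qf k ?Y c = (\<Sum>a<k. \<Sum>b<k. cnj (c a) * (\<Sum>s<m. \<Sum>r<m. cnj (g s) * X $$ (a*m+s, b*m+r) * g r) * c b)"
      unfolding qf_def by (intro sum.cong refl) simp
    also have "\<dots> = (\<Sum>a<k. \<Sum>b<k. \<Sum>s<m. \<Sum>r<m. cnj (c ((a*m+s) div m) * g ((a*m+s) mod m)) * X $$ (a*m+s, b*m+r) * (c ((b*m+r) div m) * g ((b*m+r) mod m)))"
    proof (intro sum.cong refl)
      fix a b
      show "cnj (c a) * (\<Sum>s<m. \<Sum>r<m. cnj (g s) * X $$ (a*m+s, b*m+r) * g r) * c b =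
        (\<Sum>s<m. \<Sum>r<m. cnj (c ((a*m+s) div m) * g ((a*m+s) mod m)) * X $$ (a*m+s, b*m+r) * (c ((b*m+r) div m) * g ((b*m+r) mod m)))"
        by (simp add: sum_distrib_left sum_distrib_right divmod_simps ac_simps)
    qed
    also have "\<dots> = qf (k*m) X (\<lambda>i. c (i div m) * g (i mod m))" unfolding qf_block ..
    finally show ?thesis .
  qed
  moreover have "Im (qf (k*m) X y) = 0 \<and> Re (qf (k*m) X y) \<ge> 0" for y using X unfolding psd_def by blast
  ultimately show ?thesis unfolding psd_def by auto
qed

lemma blk_carrier[simp]: "blk m X a b \<in> carrier_mat m m"
  unfolding blk_def by simp

lemma psd_partial:
  assumes G: "psd m G" and X: "psd (k*m) X"
  shows "psd k (mat k k (\<lambda>(a, b). mtrace (G * blk m X a b)))"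
proof -
  obtain n :: nat and g where g: "\<forall>r<m. \<forall>s<m. G $$ (r, s) = (\<Sum>t<n. g t r * cnj (g t s))"
    using psd_gram[OF G] by blast
  have Gc: "G \<in> carrier_mat m m" using G psd_def by auto
  have ent: "mtrace (G * blk m X a b) = (\<Sum>t<n. \<Sum>s<m. \<Sum>r<m. cnj (g t s) * X $$ (a*m+s, b*m+r) * g t r)" for a b
  proof -
    have "mtrace (G * blk m X a b) = (\<Sum>r<m. \<Sum>s<m. (\<Sum>t<n. g t r * cnj (g t s)) * X $$ (a*m+s, b*m+r))"
      unfolding mtrace_mult[OF Gc blk_carrier] using g by (intro sum.cong refl) (simp add: blk_def)
    also have "\<dots> = (\<Sum>r<m. \<Sum>s<m. \<Sum>t<n. cnj (g t s) * X $$ (a*m+s, b*m+r) * g t r)"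
      by (intro sum.cong refl) (simp add: sum_distrib_right ac_simps)
    also have "\<dots> = (\<Sum>r<m. \<Sum>t<n. \<Sum>s<m. cnj (g t s) * X $$ (a*m+s, b*m+r) * g t r)"
      by (rule sum.cong[OF refl], rule sum.swap)
    also have "\<dots> = (\<Sum>t<n. \<Sum>r<m. \<Sum>s<m. cnj (g t s) * X $$ (a*m+s, b*m+r) * g t r)"
      by (rule sum.swap)
    also have "\<dots> = (\<Sum>t<n. \<Sum>s<m. \<Sum>r<m. cnj (g t s) * X $$ (a*m+s, b*m+r) * g t r)"
      by (rule sum.cong[OF refl], rule sum.swap)
    finally show ?thesis .
  qed
  have "mat k k (\<lambda>(a, b). mtrace (G * blk m X a b)) =
      mat k k (\<lambda>ab. \<Sum>t<n. (\<lambda>t (a, b). \<Sum>s<m. \<Sum>r<m. cnj (g t s) * X $$ (a*m+s, b*m+r) * g t r) t ab)"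
    by (rule eq_matI) (auto simp: ent)
  also have "psd k \<dots>"
    by (rule psd_sum_mat, rule psd_partial_rank1[OF X])
  finally show ?thesis .
qed

lemma mtrace_add:
  assumes "A \<in> carrier_mat n n" "B \<in> carrier_mat n n"
  shows "mtrace (A + B) = mtrace A + mtrace B"
  using assms unfolding mtrace_def by (simp add: sum.distrib)

lemma mtrace_smult: assumes "A \<in> carrier_mat n n" shows "mtrace (c \<cdot>\<^sub>m A) = c * mtrace A"
  using assms unfolding mtrace_def by (auto simp: sum_distrib_left intro!: sum.cong)

lemma mtrace_msum:
  assumes "finite S" "\<And>z. z \<in> S \<Longrightarrow> f z \<in> carrier_mat n n"
  shows "mtrace (msum n n f S) = (\<Sum>z\<in>S. mtrace (f z))"
proof -
  have "mtrace (msum n n f S) = (\<Sum>i<n. \<Sum>z\<in>S. f z $$ (i, i))"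
    unfolding mtrace_def msum_def by simp
  also have "\<dots> = (\<Sum>z\<in>S. \<Sum>i<n. f z $$ (i, i))" by (rule sum.swap)
  also have "\<dots> = (\<Sum>z\<in>S. mtrace (f z))" unfolding mtrace_def using assms by (intro sum.cong) auto
  finally show ?thesis .
qed

lemma msum_carrier[simp]: "msum n n f S \<in> carrier_mat n n"
  unfolding msum_def by simp

lemma mtrace_mult_msum:
  assumes "finite S" "\<And>z. z \<in> S \<Longrightarrow> f z \<in> carrier_mat d d" "X \<in> carrier_mat d d"
  shows "mtrace (msum d d f S * X) = (\<Sum>z\<in>S. mtrace (f z * X))"
proof -
  have "mtrace (msum d d f S * X) = (\<Sum>r<d. \<Sum>s<d. (\<Sum>z\<in>S. f z $$ (r, s)) * X $$ (s, r))"
    unfolding mtrace_mult[OF msum_carrier assms(3)] by (intro sum.cong refl) (simp add: msum_def)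
  also have "\<dots> = (\<Sum>r<d. \<Sum>z\<in>S. \<Sum>s<d. f z $$ (r, s) * X $$ (s, r))"
    by (intro sum.cong refl) (simp add: sum_distrib_right, rule sum.swap)
  also have "\<dots> = (\<Sum>z\<in>S. \<Sum>r<d. \<Sum>s<d. f z $$ (r, s) * X $$ (s, r))"
    by (rule sum.swap)
  also have "\<dots> = (\<Sum>z\<in>S. mtrace (f z * X))"
  proof (rule sum.cong[OF refl])
    fix z assume z: "z \<in> S"
    show "(\<Sum>r<d. \<Sum>s<d. f z $$ (r, s) * X $$ (s, r)) = mtrace (f z * X)"
      using mtrace_mult[OF assms(2)[OF z] assms(3)] by simp
  qed
  finally show ?thesis .
qed

lemma mtrace_ptrace_first:
  assumes "M \<in> carrier_mat (k*v) (k*v)"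
  shows "mtrace (ptrace_first k v M) = mtrace M"
proof -
  have "mtrace (ptrace_first k v M) = (\<Sum>b<v. \<Sum>a<k. M $$ (a*v+b, a*v+b))"
    unfolding mtrace_def ptrace_first_def by simp
  also have "\<dots> = (\<Sum>a<k. \<Sum>b<v. M $$ (a*v+b, a*v+b))" by (rule sum.swap)
  also have "\<dots> = mtrace M" unfolding mtrace_def using assms sum_reindex_mult[of "\<lambda>i. M $$ (i, i)" k v] by simp
  finally show ?thesis .
qed

lemma mtrace_ptrace_second:
  assumes "M \<in> carrier_mat (k*v) (k*v)"
  shows "mtrace (ptrace_second k v M) = mtrace M"
proof -
  have "mtrace (ptrace_second k v M) = (\<Sum>a<k. \<Sum>b<v. M $$ (a*v+b, a*v+b))"
    unfolding mtrace_def ptrace_second_def by simp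
  also have "\<dots> = mtrace M" unfolding mtrace_def using assms sum_reindex_mult[of "\<lambda>i. M $$ (i, i)" k v] by simp
  finally show ?thesis .
qed

lemma kron_carrier[simp]: "kron k n P Q \<in> carrier_mat (k*n) (k*n)"
  unfolding kron_def by simp

lemma kron_dims[simp]: "dim_row (kron k n P Q) = k*n" "dim_col (kron k n P Q) = k*n"
  unfolding kron_def by simp_all

lemma kron_index:
  assumes "a < k" "b < k" "p < n" "q < n"
  shows "kron k n P Q $$ (a*n+p, b*n+q) = P $$ (a, b) * Q $$ (p, q)"
  using assms idx_lt[OF assms(1,3)] idx_lt[OF assms(2,4)] unfolding kron_def by (simp add: divmod_simps)


lemma ptrace_first_kron:
  assumes "P \<in> carrier_mat k k" "Q \<in> carrier_mat n n"
  shows "ptrace_first k n (c \<cdot>\<^sub>m kron k n P Q) = (c * mtrace P) \<cdot>\<^sub>m Q"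
proof (rule eq_matI)
  fix i j assume "i < dim_row ((c * mtrace P) \<cdot>\<^sub>m Q)" "j < dim_col ((c * mtrace P) \<cdot>\<^sub>m Q)"
  then have ij: "i < n" "j < n" using assms by auto
  have "ptrace_first k n (c \<cdot>\<^sub>m kron k n P Q) $$ (i, j) = (\<Sum>a<k. c * (P $$ (a, a) * Q $$ (i, j)))"
    unfolding ptrace_first_def using ij
  proof (simp, intro sum.cong refl)
    fix a assume "a \<in> {..<k}"
    then have a: "a < k" by simp
    show "(c \<cdot>\<^sub>m kron k n P Q) $$ (a * n + i, a * n + j) = c * (P $$ (a, a) * Q $$ (i, j))"
      using idx_lt[OF a ij(1)] idx_lt[OF a ij(2)] kron_index[OF a a ij, where P=P and Q=Q] by simp
  qed
  also have "\<dots> = ((c * mtrace P) \<cdot>\<^sub>m Q) $$ (i, j)"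
    using assms ij unfolding mtrace_def by (simp add: sum_distrib_left sum_distrib_right ac_simps)
  finally show "ptrace_first k n (c \<cdot>\<^sub>m kron k n P Q) $$ (i, j) = ((c * mtrace P) \<cdot>\<^sub>m Q) $$ (i, j)" .
qed (use assms in \<open>auto simp: ptrace_first_def\<close>)

lemma ptrace_second_kron:
  assumes "P \<in> carrier_mat k k" "Q \<in> carrier_mat n n"
  shows "ptrace_second k n (c \<cdot>\<^sub>m kron k n P Q) = (c * mtrace Q) \<cdot>\<^sub>m P"
proof (rule eq_matI)
  fix i j assume "i < dim_row ((c * mtrace Q) \<cdot>\<^sub>m P)" "j < dim_col ((c * mtrace Q) \<cdot>\<^sub>m P)"
  then have ij: "i < k" "j < k" using assms by auto
  have "ptrace_second k n (c \<cdot>\<^sub>m kron k n P Q) $$ (i, j) = (\<Sum>b<n. c * (P $$ (i, j) * Q $$ (b, b)))"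
    unfolding ptrace_second_def using ij
  proof (simp, intro sum.cong refl)
    fix b assume "b \<in> {..<n}"
    then have b: "b < n" by simp
    show "(c \<cdot>\<^sub>m kron k n P Q) $$ (i * n + b, j * n + b) = c * (P $$ (i, j) * Q $$ (b, b))"
      using idx_lt[OF ij(1) b] idx_lt[OF ij(2) b] kron_index[OF ij b b, where P=P and Q=Q] by simp
  qed
  also have "\<dots> = ((c * mtrace Q) \<cdot>\<^sub>m P) $$ (i, j)"
    using assms ij unfolding mtrace_def by (simp add: sum_distrib_left sum_distrib_right ac_simps)
  finally show "ptrace_second k n (c \<cdot>\<^sub>m kron k n P Q) $$ (i, j) = ((c * mtrace Q) \<cdot>\<^sub>m P) $$ (i, j)" .
qed (use assms in \<open>auto simp: ptrace_second_def\<close>)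

lemma mtrace_kron:
  assumes "P \<in> carrier_mat k k" "Q \<in> carrier_mat n n"
  shows "mtrace (kron k n P Q) = mtrace P * mtrace Q"
proof -
  have "mtrace (kron k n P Q) = mtrace (1 \<cdot>\<^sub>m kron k n P Q)" unfolding mtrace_smult[OF kron_carrier] by simp
  also have "\<dots> = mtrace (ptrace_first k n (1 \<cdot>\<^sub>m kron k n P Q))"
    by (rule mtrace_ptrace_first[symmetric]) simp
  also have "\<dots> = mtrace P * mtrace Q" unfolding ptrace_first_kron[OF assms] mtrace_smult[OF assms(2)] by simp
  finally show ?thesis .
qed

lemma msum_smult:
  assumes "Q \<in> carrier_mat n n"
  shows "msum n n (\<lambda>z. a z \<cdot>\<^sub>m Q) S = (\<Sum>z\<in>S. a z) \<cdot>\<^sub>m Q"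
  using assms by (intro eq_matI) (auto simp: msum_def sum_distrib_right)

definition Emat :: "nat \<Rightarrow> nat \<Rightarrow> nat \<Rightarrow> complex mat" where
  "Emat m a b = mat m m (\<lambda>(r, s). if r = a \<and> s = b then 1 else 0)"

definition dual :: "nat \<Rightarrow> (complex mat \<Rightarrow> complex mat) \<Rightarrow> complex mat" where
  "dual m \<Phi> = mat m m (\<lambda>(i, j). mtrace (\<Phi> (Emat m j i)))"

lemma Emat_carrier[simp]: "Emat m a b \<in> carrier_mat m m" unfolding Emat_def by simp
lemma dual_carrier[simp]: "dual m \<Phi> \<in> carrier_mat m m" unfolding dual_def by simp

lemma mtrace_Emat: "a < m \<Longrightarrow> b < m \<Longrightarrow> mtrace (Emat m a b) = (if a = b then 1 else 0)"
proof (cases "a = b")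
  case True
  assume "a < m" "b < m"
  then show ?thesis using True unfolding mtrace_def Emat_def by (simp add: sum.delta)
next
  case False
  assume "a < m" "b < m"
  then show ?thesis using False unfolding mtrace_def Emat_def by (auto intro!: sum.neutral)
qed

lemma linear_lincomb:
  assumes L: "linear_map m n \<Phi>" and X: "X \<in> carrier_mat m m"
    and S: "finite S" "S \<subseteq> {..<m} \<times> {..<m}"
  shows "mtrace (\<Phi> (mat m m (\<lambda>p. if p \<in> S then X $$ p else 0))) = (\<Sum>p\<in>S. X $$ p * mtrace (\<Phi> (Emat m (fst p) (snd p))))"
  using S
proof (induction S rule: finite_induct)
  case empty
  have z: "mat m m (\<lambda>p. if p \<in> {} then X $$ p else 0) = 0 \<cdot>\<^sub>m Emat m 0 0"
    by (rule eq_matI) (auto simp: Emat_def)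
  have "\<Phi> (0 \<cdot>\<^sub>m Emat m 0 0) = 0 \<cdot>\<^sub>m \<Phi> (Emat m 0 0)" using L unfolding linear_map_def by simp
  moreover have "\<Phi> (Emat m 0 0) \<in> carrier_mat n n" using L unfolding linear_map_def by simp
  ultimately show ?case unfolding z by (simp add: mtrace_smult)
next
  case (insert p S)
  have p: "fst p < m" "snd p < m" using insert by auto
  have dec: "mat m m (\<lambda>q. if q \<in> insert p S then X $$ q else 0) =
      mat m m (\<lambda>q. if q \<in> S then X $$ q else 0) + X $$ p \<cdot>\<^sub>m Emat m (fst p) (snd p)"
    by (rule eq_matI) (use insert in \<open>auto simp: Emat_def\<close>)
  have c1: "mat m m (\<lambda>q. if q \<in> S then X $$ q else 0) \<in> carrier_mat m m" by simp
  have c2: "X $$ p \<cdot>\<^sub>m Emat m (fst p) (snd p) \<in> carrier_mat m m" by simp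
  have "\<Phi> (mat m m (\<lambda>q. if q \<in> insert p S then X $$ q else 0)) =
      \<Phi> (mat m m (\<lambda>q. if q \<in> S then X $$ q else 0)) + X $$ p \<cdot>\<^sub>m \<Phi> (Emat m (fst p) (snd p))"
    unfolding dec using L c1 c2 unfolding linear_map_def by simp
  moreover have "\<Phi> (mat m m (\<lambda>q. if q \<in> S then X $$ q else 0)) \<in> carrier_mat n n"
    "\<Phi> (Emat m (fst p) (snd p)) \<in> carrier_mat n n" using L c1 unfolding linear_map_def by auto
  ultimately show ?case using insert by (simp add: mtrace_add[of _ n] mtrace_smult[of _ n])
qed

lemma trace_dual:
  assumes L: "linear_map m n \<Phi>" and X: "X \<in> carrier_mat m m"
  shows "mtrace (\<Phi> X) = mtrace (dual m \<Phi> * X)"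
proof -
  have XX: "mat m m (\<lambda>p. if p \<in> {..<m} \<times> {..<m} then X $$ p else 0) = X"
    using X by (intro eq_matI) auto
  have "mtrace (\<Phi> X) = (\<Sum>p\<in>{..<m} \<times> {..<m}. X $$ p * mtrace (\<Phi> (Emat m (fst p) (snd p))))"
    using linear_lincomb[OF L X, of "{..<m} \<times> {..<m}"] unfolding XX by simp
  also have "\<dots> = (\<Sum>a<m. \<Sum>b<m. X $$ (a, b) * mtrace (\<Phi> (Emat m a b)))"
    by (simp add: sum.cartesian_product split_def)
  also have "\<dots> = (\<Sum>b<m. \<Sum>a<m. X $$ (a, b) * mtrace (\<Phi> (Emat m a b)))" by (rule sum.swap)
  also have "\<dots> = mtrace (dual m \<Phi> * X)"
    unfolding mtrace_mult[OF dual_carrier X] unfolding dual_def by (intro sum.cong refl) (simp add: mult.commute)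
  finally show ?thesis .
qed

lemma ampl1:
  assumes L: "linear_map m n \<Phi>" and X: "X \<in> carrier_mat m m"
  shows "ampl 1 m n \<Phi> X = \<Phi> X"
proof -
  have XX: "mat m m (\<lambda>(r, s). X $$ (0 * m + r, 0 * m + s)) = X" using X by (intro eq_matI) auto
  have c: "\<Phi> X \<in> carrier_mat n n" using L X unfolding linear_map_def by auto
  show ?thesis
  proof (rule eq_matI)
    fix i j assume "i < dim_row (\<Phi> X)" "j < dim_col (\<Phi> X)"
    then have ij: "i < n" "j < n" using c by auto
    then show "ampl 1 m n \<Phi> X $$ (i, j) = \<Phi> X $$ (i, j)" unfolding ampl_def using XX by simp
  qed (use c in \<open>auto simp: ampl_def\<close>)
qed

lemma cp_pos:
  assumes "completely_positive m n \<Phi>" "psd m X"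
  shows "psd n (\<Phi> X)"
proof -
  have L: "linear_map m n \<Phi>" and cp: "positive_op (1*m) X \<longrightarrow> positive_op (1*n) (ampl 1 m n \<Phi> X)"
    using assms(1) unfolding completely_positive_def by blast+
  have X: "X \<in> carrier_mat m m" using assms(2) psd_def by auto
  show ?thesis using cp assms(2) ampl1[OF L X] by (simp add: positive_op_psd)
qed

definition rk1 :: "nat \<Rightarrow> (nat \<Rightarrow> complex) \<Rightarrow> complex mat" where
  "rk1 m f = mat m m (\<lambda>(i, j). f i * cnj (f j))"

lemma rk1_carrier[simp]: "rk1 m f \<in> carrier_mat m m" unfolding rk1_def by simp

lemma psd_rk1: "psd m (rk1 m f)"
proof -
  have "qf m (rk1 m f) g = complex_of_real ((cmod (\<Sum>i<m. cnj (g i) * f i))^2)" for g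
  proof -
    have "qf m (rk1 m f) g = (\<Sum>i<m. cnj (g i) * f i) * (\<Sum>j<m. cnj (f j) * g j)"
      unfolding qf_def rk1_def by (simp add: sum_product ac_simps)
    also have "(\<Sum>j<m. cnj (f j) * g j) = cnj (\<Sum>i<m. cnj (g i) * f i)" by (simp add: cnj_sum ac_simps)
    finally show ?thesis using complex_norm_square by simp
  qed
  then show ?thesis unfolding psd_def by simp
qed

lemma qf_trace_rk1:
  assumes "D \<in> carrier_mat m m"
  shows "qf m D f = mtrace (D * rk1 m f)"
proof -
  have "mtrace (D * rk1 m f) = (\<Sum>r<m. \<Sum>s<m. cnj (f r) * D $$ (r, s) * f s)"
    unfolding mtrace_mult[OF assms rk1_carrier] unfolding rk1_def by (intro sum.cong refl) (simp add: ac_simps)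
  then show ?thesis unfolding qf_def by simp
qed

lemma qf_smult:
  assumes "M \<in> carrier_mat d d"
  shows "qf d (c \<cdot>\<^sub>m M) g = c * qf d M g"
  using assms unfolding qf_def by (auto simp: sum_distrib_left ac_simps intro!: sum.cong)

lemma mtrace_rk1: "mtrace (rk1 d f) = complex_of_real (\<Sum>i<d. (cmod (f i))^2)"
proof -
  have "mtrace (rk1 d f) = (\<Sum>i<d. f i * cnj (f i))" unfolding mtrace_def rk1_def by simp
  also have "\<dots> = (\<Sum>i<d. complex_of_real ((cmod (f i))^2))"
    by (intro sum.cong refl) (rule complex_norm_square[symmetric])
  finally show ?thesis by simp
qed

lemma state_unique:
  assumes M: "M \<in> carrier_mat d d" and N: "N \<in> carrier_mat d d"
    and eq: "\<And>\<rho>. is_state d \<rho> \<Longrightarrow> mtrace (M * \<rho>) = mtrace (N * \<rho>)"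
  shows "M = N"
proof (rule qf_eq_imp_eq[OF M N])
  fix f
  define t where "t = (\<Sum>i<d. (cmod (f i))^2)"
  have t0: "t \<ge> 0" unfolding t_def by (simp add: sum_nonneg)
  show "qf d M f = qf d N f"
  proof (cases "t = 0")
    case True
    then have "\<forall>i\<in>{..<d}. (cmod (f i))^2 = 0" unfolding t_def
      by (subst sum_nonneg_eq_0_iff[symmetric]) auto
    then have z: "\<And>i. i < d \<Longrightarrow> f i = 0" by auto
    have "qf d K f = 0" for K unfolding qf_def by (intro sum.neutral) (simp add: z)
    then show ?thesis by simp
  next
    case False
    then have tp: "t > 0" using t0 by simp
    define \<rho> where "\<rho> = complex_of_real (1 / t) \<cdot>\<^sub>m rk1 d f"
    have \<rho>c: "\<rho> \<in> carrier_mat d d" unfolding \<rho>_def by simp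
    have "psd d \<rho>"
      unfolding psd_def
    proof (intro conjI allI)
      show "\<rho> \<in> carrier_mat d d" by fact
      fix g
      have q: "qf d \<rho> g = complex_of_real (1 / t) * qf d (rk1 d f) g"
        unfolding \<rho>_def by (rule qf_smult) simp
      have "Im (qf d (rk1 d f) g) = 0" "Re (qf d (rk1 d f) g) \<ge> 0" using psd_rk1 unfolding psd_def by blast+
      then show "Im (qf d \<rho> g) = 0" "Re (qf d \<rho> g) \<ge> 0" unfolding q using tp by simp_all
    qed
    moreover have "mtrace \<rho> = 1" unfolding \<rho>_def mtrace_smult[OF rk1_carrier] mtrace_rk1 t_def[symmetric]
      using tp by (simp flip: of_real_mult)
    ultimately have st: "is_state d \<rho>" unfolding is_state_def positive_op_psd by simp
    have tr: "mtrace (K * \<rho>) = complex_of_real (1 / t) * qf d K f" if K: "K \<in> carrier_mat d d" for K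
    proof -
      have "K * \<rho> = complex_of_real (1 / t) \<cdot>\<^sub>m (K * rk1 d f)" unfolding \<rho>_def
        by (rule mult_smult_distrib[OF K rk1_carrier])
      then show ?thesis using mtrace_smult[of "K * rk1 d f" d] qf_trace_rk1[OF K] K by simp
    qed
    have "complex_of_real (1 / t) * qf d M f = complex_of_real (1 / t) * qf d N f"
      using eq[OF st] tr[OF M] tr[OF N] by simp
    then show ?thesis using tp by simp
  qed
qed

lemma ptrace_first_carrier[simp]: "ptrace_first k v M \<in> carrier_mat v v"
  unfolding ptrace_first_def by simp
lemma ptrace_second_carrier[simp]: "ptrace_second k v M \<in> carrier_mat k k"
  unfolding ptrace_second_def by simp

lemma forward:
  fixes I :: "'x::finite \<Rightarrow> complex mat \<Rightarrow> complex mat"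
    and J :: "'y::finite \<Rightarrow> complex mat \<Rightarrow> complex mat"
    and AI :: "'x \<Rightarrow> complex mat" and AJ :: "'y \<Rightarrow> complex mat"
  assumes iI: "induced_povm dH I AI" and iJ: "induced_povm dH J AJ"
    and comp: "compatible_instruments dH dK dV I J"
  shows "compatible_povms dH AI AJ"
proof -
  obtain G :: "'x \<times> 'y \<Rightarrow> complex mat \<Rightarrow> complex mat" where
    G: "is_instrument dH (dK * dV) G" and
    marg: "\<And>\<rho>. is_state dH \<rho> \<Longrightarrow>
          (\<forall>y. msum dV dV (\<lambda>x. ptrace_first dK dV (G (x, y) \<rho>)) UNIV = J y \<rho>) \<and>
          (\<forall>x. msum dK dK (\<lambda>y. ptrace_second dK dV (G (x, y) \<rho>)) UNIV = I x \<rho>)"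
    using comp unfolding compatible_instruments_def by blast
  define n where "n = dK * dV"
  have cp: "completely_positive dH n (G z)" for z using G unfolding is_instrument_def n_def by blast
  then have L: "linear_map dH n (G z)" for z unfolding completely_positive_def by blast
  have Gc: "X \<in> carrier_mat dH dH \<Longrightarrow> G z X \<in> carrier_mat n n" for z X
    using L[of z] unfolding linear_map_def by blast
  have tp: "\<And>X. X \<in> carrier_mat dH dH \<Longrightarrow> mtrace (msum n n (\<lambda>z. G z X) UNIV) = mtrace X"
    using G unfolding is_instrument_def trace_preserving_def n_def by blast
  define A where "A z = dual dH (G z)" for z
  have Ac: "A z \<in> carrier_mat dH dH" for z unfolding A_def by simp
  have trA: "X \<in> carrier_mat dH dH \<Longrightarrow> mtrace (G z X) = mtrace (A z * X)" for z X
    unfolding A_def by (rule trace_dual[OF L])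
  have posA: "positive_op dH (A z)" for z
  proof -
    have "psd dH (A z)" unfolding psd_def
    proof (intro conjI allI)
      show "A z \<in> carrier_mat dH dH" by (rule Ac)
      fix f
      have "qf dH (A z) f = mtrace (G z (rk1 dH f))"
        using qf_trace_rk1[OF Ac] trA[OF rk1_carrier] by simp
      moreover have "psd n (G z (rk1 dH f))" by (rule cp_pos[OF cp psd_rk1])
      ultimately show "Im (qf dH (A z) f) = 0" "Re (qf dH (A z) f) \<ge> 0" using psd_trace by auto
    qed
    then show ?thesis by (simp add: positive_op_psd)
  qed
  have sumA: "msum dH dH A UNIV = 1\<^sub>m dH"
  proof (rule eq_matI)
    fix i j assume "i < dim_row (1\<^sub>m dH :: complex mat)" "j < dim_col (1\<^sub>m dH :: complex mat)"
    then have ij: "i < dH" "j < dH" by auto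
    have "msum dH dH A UNIV $$ (i, j) = (\<Sum>z\<in>UNIV. mtrace (G z (Emat dH j i)))"
      unfolding msum_def A_def dual_def using ij by simp
    also have "\<dots> = mtrace (msum n n (\<lambda>z. G z (Emat dH j i)) UNIV)"
      by (rule mtrace_msum[symmetric]) (auto intro: Gc)
    also have "\<dots> = mtrace (Emat dH j i)" by (rule tp) simp
    also have "\<dots> = 1\<^sub>m dH $$ (i, j)" using ij by (simp add: mtrace_Emat)
    finally show "msum dH dH A UNIV $$ (i, j) = 1\<^sub>m dH $$ (i, j)" .
  qed (auto simp: msum_def)
  have stc: "is_state dH \<rho> \<Longrightarrow> \<rho> \<in> carrier_mat dH dH" for \<rho>
    unfolding is_state_def positive_op_def by blast
  have AJc: "AJ y \<in> carrier_mat dH dH" for y using iJ unfolding induced_povm_def by blast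
  have AIc: "AI x \<in> carrier_mat dH dH" for x using iI unfolding induced_povm_def by blast
  have margJ: "msum dH dH (\<lambda>x. A (x, y)) UNIV = AJ y" for y
  proof (rule state_unique[OF msum_carrier AJc])
    fix \<rho> assume st: "is_state dH \<rho>"
    note \<rho>c = stc[OF st]
    have "mtrace (msum dH dH (\<lambda>x. A (x, y)) UNIV * \<rho>) = (\<Sum>x\<in>UNIV. mtrace (A (x, y) * \<rho>))"
      by (rule mtrace_mult_msum[OF _ Ac \<rho>c]) simp
    also have "\<dots> = (\<Sum>x\<in>UNIV. mtrace (ptrace_first dK dV (G (x, y) \<rho>)))"
      using trA[OF \<rho>c] mtrace_ptrace_first Gc[OF \<rho>c] unfolding n_def by simp
    also have "\<dots> = mtrace (msum dV dV (\<lambda>x. ptrace_first dK dV (G (x, y) \<rho>)) UNIV)"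
      by (rule mtrace_msum[symmetric]) auto
    also have "\<dots> = mtrace (J y \<rho>)" using marg[OF st] by simp
    also have "\<dots> = mtrace (AJ y * \<rho>)" using iJ st unfolding induced_povm_def by simp
    finally show "mtrace (msum dH dH (\<lambda>x. A (x, y)) UNIV * \<rho>) = mtrace (AJ y * \<rho>)" .
  qed
  have margI: "msum dH dH (\<lambda>y. A (x, y)) UNIV = AI x" for x
  proof (rule state_unique[OF msum_carrier AIc])
    fix \<rho> assume st: "is_state dH \<rho>"
    note \<rho>c = stc[OF st]
    have "mtrace (msum dH dH (\<lambda>y. A (x, y)) UNIV * \<rho>) = (\<Sum>y\<in>UNIV. mtrace (A (x, y) * \<rho>))"
      by (rule mtrace_mult_msum[OF _ Ac \<rho>c]) simp
    also have "\<dots> = (\<Sum>y\<in>UNIV. mtrace (ptrace_second dK dV (G (x, y) \<rho>)))"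
      using trA[OF \<rho>c] mtrace_ptrace_second Gc[OF \<rho>c] unfolding n_def by simp
    also have "\<dots> = mtrace (msum dK dK (\<lambda>y. ptrace_second dK dV (G (x, y) \<rho>)) UNIV)"
      by (rule mtrace_msum[symmetric]) auto
    also have "\<dots> = mtrace (I x \<rho>)" using marg[OF st] by simp
    also have "\<dots> = mtrace (AI x * \<rho>)" using iI st unfolding induced_povm_def by simp
    finally show "mtrace (msum dH dH (\<lambda>y. A (x, y)) UNIV * \<rho>) = mtrace (AI x * \<rho>)" .
  qed
  have "is_povm dH A" unfolding is_povm_def using posA sumA by blast
  then show ?thesis unfolding compatible_povms_def using margJ margI by blast
qed

lemma backward:
  fixes I :: "'x::finite \<Rightarrow> complex mat \<Rightarrow> complex mat"
    and J :: "'y::finite \<Rightarrow> complex mat \<Rightarrow> complex mat"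
    and AI :: "'x \<Rightarrow> complex mat" and AJ :: "'y \<Rightarrow> complex mat"
  assumes mpI: "measure_and_prepare dH dK I" and mpJ: "measure_and_prepare dH dV J"
    and iI: "induced_povm dH I AI" and iJ: "induced_povm dH J AJ"
    and cpv: "compatible_povms dH AI AJ"
  shows "compatible_instruments dH dK dV I J"
proof -
  obtain G :: "'x \<times> 'y \<Rightarrow> complex mat" where G: "is_povm dH G"
    and mJ: "\<And>y. msum dH dH (\<lambda>x. G (x, y)) UNIV = AJ y"
    and mI: "\<And>x. msum dH dH (\<lambda>y. G (x, y)) UNIV = AI x"
    using cpv unfolding compatible_povms_def by blast
  obtain A1 \<xi> where \<xi>: "\<And>x. is_state dK (\<xi> x)"
    and I: "\<And>x \<rho>. is_state dH \<rho> \<Longrightarrow> I x \<rho> = mtrace (A1 x * \<rho>) \<cdot>\<^sub>m \<xi> x"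
    using mpI unfolding measure_and_prepare_def by blast
  obtain A2 \<eta> where \<eta>: "\<And>y. is_state dV (\<eta> y)"
    and J: "\<And>y \<rho>. is_state dH \<rho> \<Longrightarrow> J y \<rho> = mtrace (A2 y * \<rho>) \<cdot>\<^sub>m \<eta> y"
    using mpJ unfolding measure_and_prepare_def by blast
  define n where "n = dK * dV"
  define \<sigma> where "\<sigma> z = kron dK dV (\<xi> (fst z)) (\<eta> (snd z))" for z :: "'x \<times> 'y"
  define GG where "GG z X = mtrace (G z * X) \<cdot>\<^sub>m \<sigma> z" for z X
  have Gpsd: "psd dH (G z)" for z using G unfolding is_povm_def positive_op_psd by blast
  have Gc: "G z \<in> carrier_mat dH dH" for z using Gpsd psd_def by blast
  have Gsum: "msum dH dH G UNIV = 1\<^sub>m dH" using G unfolding is_povm_def by blast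
  have \<xi>psd: "psd dK (\<xi> x)" and \<xi>c: "\<xi> x \<in> carrier_mat dK dK" and \<xi>t: "mtrace (\<xi> x) = 1" for x
    using \<xi>[of x] unfolding is_state_def positive_op_psd psd_def by auto
  have \<eta>psd: "psd dV (\<eta> y)" and \<eta>c: "\<eta> y \<in> carrier_mat dV dV" and \<eta>t: "mtrace (\<eta> y) = 1" for y
    using \<eta>[of y] unfolding is_state_def positive_op_psd psd_def by auto
  have \<sigma>psd: "psd n (\<sigma> z)" for z unfolding \<sigma>_def n_def by (rule psd_kron[OF \<xi>psd \<eta>psd])
  have \<sigma>c: "\<sigma> z \<in> carrier_mat n n" for z unfolding \<sigma>_def n_def by simp
  have \<sigma>t: "mtrace (\<sigma> z) = 1" for z unfolding \<sigma>_def using mtrace_kron[OF \<xi>c \<eta>c] \<xi>t \<eta>t by simp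
  have trGG: "mtrace (GG z X) = mtrace (G z * X)" for z X
    unfolding GG_def mtrace_smult[OF \<sigma>c] \<sigma>t by simp
  have sumtr: "(\<Sum>z\<in>UNIV. mtrace (G z * X)) = mtrace X" if X: "X \<in> carrier_mat dH dH" for X
  proof -
    have "(\<Sum>z\<in>UNIV. mtrace (G z * X)) = mtrace (msum dH dH G UNIV * X)"
      by (rule mtrace_mult_msum[symmetric, OF _ Gc X]) simp
    also have "\<dots> = mtrace X" unfolding Gsum using X by simp
    finally show ?thesis .
  qed
  have trpos: "Re (mtrace (G z * X)) \<ge> 0" if X: "psd dH X" for z X
  proof -
    have Xc: "X \<in> carrier_mat dH dH" using X psd_def by blast
    have "psd 1 (mat 1 1 (\<lambda>(a, b). mtrace (G z * blk dH X a b)))"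
      by (rule psd_partial[OF Gpsd]) (use X in simp)
    from psd_diag[OF this, of 0] have "Re (mtrace (G z * blk dH X 0 0)) \<ge> 0" by simp
    moreover have "blk dH X 0 0 = X" unfolding blk_def using Xc by (intro eq_matI) auto
    ultimately show ?thesis by simp
  qed
  have lin: "linear_map dH n (GG z)" for z
    unfolding linear_map_def
  proof (intro conjI ballI allI)
    fix X :: "complex mat" assume "X \<in> carrier_mat dH dH"
    show "GG z X \<in> carrier_mat n n" unfolding GG_def using \<sigma>c by simp
  next
    fix X Y :: "complex mat" assume X: "X \<in> carrier_mat dH dH" and Y: "Y \<in> carrier_mat dH dH"
    have "mtrace (G z * (X + Y)) = mtrace (G z * X) + mtrace (G z * Y)"
      unfolding mult_add_distrib_mat[OF Gc X Y] by (rule mtrace_add[OF mult_carrier_mat[OF Gc X] mult_carrier_mat[OF Gc Y]])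
    then show "GG z (X + Y) = GG z X + GG z Y" unfolding GG_def
      by (simp add: add_smult_distrib_right_mat[OF \<sigma>c])
  next
    fix c and X :: "complex mat" assume X: "X \<in> carrier_mat dH dH"
    have "mtrace (G z * (c \<cdot>\<^sub>m X)) = c * mtrace (G z * X)"
      unfolding mult_smult_distrib[OF Gc X] by (rule mtrace_smult[OF mult_carrier_mat[OF Gc X]])
    then show "GG z (c \<cdot>\<^sub>m X) = c \<cdot>\<^sub>m GG z X" unfolding GG_def
      by (intro eq_matI) auto
  qed
  have ampl_eq: "ampl k dH n (GG z) X = kron k n (mat k k (\<lambda>(a, b). mtrace (G z * blk dH X a b))) (\<sigma> z)" for z k X
  proof (rule eq_matI)
    fix i j assume "i < dim_row (kron k n (mat k k (\<lambda>(a, b). mtrace (G z * blk dH X a b))) (\<sigma> z))"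
      "j < dim_col (kron k n (mat k k (\<lambda>(a, b). mtrace (G z * blk dH X a b))) (\<sigma> z))"
    then have ij: "i < k * n" "j < k * n" by auto
    then have np: "n > 0" by (cases n) auto
    then have md: "i mod n < n" "j mod n < n" by auto
    have dv: "i div n < k" "j div n < k" using ij by (auto intro: less_mult_imp_div_less)
    show "ampl k dH n (GG z) X $$ (i, j) = kron k n (mat k k (\<lambda>(a, b). mtrace (G z * blk dH X a b))) (\<sigma> z) $$ (i, j)"
      unfolding ampl_def kron_def GG_def using ij md dv np \<sigma>c[of z] by (simp add: blk_def)
  qed (auto simp: ampl_def)
  have cp: "completely_positive dH n (GG z)" for z
    unfolding completely_positive_def
  proof (intro conjI allI impI)
    show "linear_map dH n (GG z)" by (rule lin)
    fix k X assume "positive_op (k * dH) X"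
    then have X: "psd (k * dH) X" by (simp add: positive_op_psd)
    show "positive_op (k * n) (ampl k dH n (GG z) X)"
      unfolding ampl_eq positive_op_psd by (rule psd_kron[OF psd_partial[OF Gpsd X] \<sigma>psd])
  qed
  have tn: "trace_nonincreasing dH (GG z)" for z
    unfolding trace_nonincreasing_def
  proof (intro allI impI)
    fix X assume "positive_op dH X"
    then have X: "psd dH X" by (simp add: positive_op_psd)
    then have Xc: "X \<in> carrier_mat dH dH" using psd_def by blast
    have "Re (mtrace (GG z X)) = Re (mtrace (G z * X))" unfolding trGG ..
    also have "\<dots> \<le> (\<Sum>z'\<in>UNIV. Re (mtrace (G z' * X)))"
      by (rule member_le_sum) (use trpos[OF X] in auto)
    also have "\<dots> = Re (mtrace X)" using sumtr[OF Xc] by (simp flip: Re_sum)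
    finally show "Re (mtrace (GG z X)) \<le> Re (mtrace X)" .
  qed
  have tp: "trace_preserving dH (\<lambda>X. msum n n (\<lambda>z. GG z X) UNIV)"
    unfolding trace_preserving_def
  proof
    fix X :: "complex mat" assume X: "X \<in> carrier_mat dH dH"
    have "mtrace (msum n n (\<lambda>z. GG z X) UNIV) = (\<Sum>z\<in>UNIV. mtrace (GG z X))"
      by (rule mtrace_msum) (auto simp: GG_def \<sigma>c)
    also have "\<dots> = mtrace X" unfolding trGG by (rule sumtr[OF X])
    finally show "mtrace (msum n n (\<lambda>z. GG z X) UNIV) = mtrace X" .
  qed
  have inst: "is_instrument dH (dK * dV) GG"
    unfolding is_instrument_def n_def[symmetric] using cp tn tp by blast
  have margs: "(\<forall>y. msum dV dV (\<lambda>x. ptrace_first dK dV (GG (x, y) \<rho>)) UNIV = J y \<rho>) \<and>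
          (\<forall>x. msum dK dK (\<lambda>y. ptrace_second dK dV (GG (x, y) \<rho>)) UNIV = I x \<rho>)"
    if st: "is_state dH \<rho>" for \<rho>
  proof (intro conjI allI)
    have \<rho>c: "\<rho> \<in> carrier_mat dH dH" using st unfolding is_state_def positive_op_def by blast
    fix y
    have "msum dV dV (\<lambda>x. ptrace_first dK dV (GG (x, y) \<rho>)) UNIV =
        msum dV dV (\<lambda>x. mtrace (G (x, y) * \<rho>) \<cdot>\<^sub>m \<eta> y) UNIV"
      unfolding GG_def \<sigma>_def using ptrace_first_kron[OF \<xi>c \<eta>c] \<xi>t by simp
    also have "\<dots> = (\<Sum>x\<in>UNIV. mtrace (G (x, y) * \<rho>)) \<cdot>\<^sub>m \<eta> y" by (rule msum_smult[OF \<eta>c])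
    also have "(\<Sum>x\<in>UNIV. mtrace (G (x, y) * \<rho>)) = mtrace (AJ y * \<rho>)"
      unfolding mJ[symmetric] by (rule mtrace_mult_msum[symmetric, OF _ Gc \<rho>c]) simp
    also have "mtrace (AJ y * \<rho>) = mtrace (J y \<rho>)" using iJ st unfolding induced_povm_def by simp
    also have "\<dots> = mtrace (A2 y * \<rho>)" unfolding J[OF st] mtrace_smult[OF \<eta>c] \<eta>t by simp
    finally show "msum dV dV (\<lambda>x. ptrace_first dK dV (GG (x, y) \<rho>)) UNIV = J y \<rho>" using J[OF st] by simp
  next
    have \<rho>c: "\<rho> \<in> carrier_mat dH dH" using st unfolding is_state_def positive_op_def by blast
    fix x
    have "msum dK dK (\<lambda>y. ptrace_second dK dV (GG (x, y) \<rho>)) UNIV =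
        msum dK dK (\<lambda>y. mtrace (G (x, y) * \<rho>) \<cdot>\<^sub>m \<xi> x) UNIV"
      unfolding GG_def \<sigma>_def using ptrace_second_kron[OF \<xi>c \<eta>c] \<eta>t by simp
    also have "\<dots> = (\<Sum>y\<in>UNIV. mtrace (G (x, y) * \<rho>)) \<cdot>\<^sub>m \<xi> x" by (rule msum_smult[OF \<xi>c])
    also have "(\<Sum>y\<in>UNIV. mtrace (G (x, y) * \<rho>)) = mtrace (AI x * \<rho>)"
      unfolding mI[symmetric] by (rule mtrace_mult_msum[symmetric, OF _ Gc \<rho>c]) simp
    also have "mtrace (AI x * \<rho>) = mtrace (I x \<rho>)" using iI st unfolding induced_povm_def by simp
    also have "\<dots> = mtrace (A1 x * \<rho>)" unfolding I[OF st] mtrace_smult[OF \<xi>c] \<xi>t by simp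
    finally show "msum dK dK (\<lambda>y. ptrace_second dK dV (GG (x, y) \<rho>)) UNIV = I x \<rho>" using I[OF st] by simp
  qed
  show ?thesis unfolding compatible_instruments_def using inst margs by blast
qed

theorem proposition9:
  fixes dH dK dV :: nat
    and I :: "'x::finite \<Rightarrow> complex mat \<Rightarrow> complex mat"
    and J :: "'y::finite \<Rightarrow> complex mat \<Rightarrow> complex mat"
    and AI :: "'x \<Rightarrow> complex mat" and AJ :: "'y \<Rightarrow> complex mat"
  assumes "0 < dH" and "0 < dK" and "0 < dV"
    and "is_instrument dH dK I" and "is_instrument dH dV J"
    and "measure_and_prepare dH dK I" and "measure_and_prepare dH dV J"
    and "induced_povm dH I AI" and "induced_povm dH J AJ"
  shows "compatible_instruments dH dK dV I J \<longleftrightarrow> compatible_povms dH AI AJ"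
proof
  assume "compatible_instruments dH dK dV I J"
  then show "compatible_povms dH AI AJ" using forward assms(8,9) by blast
next
  assume "compatible_povms dH AI AJ"
  then show "compatible_instruments dH dK dV I J" using backward assms(6-9) by blast
qed

end
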